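(* Let $C$ be a saturated set of atomic constraints and let $I$ be a set of refinement variables. Let $\theta$ be a solution of the restriction $C|_I$. Then there is a solution $\theta'$ of $C$ such that $\theta'(X)(d) = \theta(X)(d)$ for all $X \in I$ and all datatypes $d$.
   Context: Fix a finite set $\underline{D}$ of datatype identifiers. Each $d \in \underline{D}$ has a finite set $\mathrm{Con}(d)$ of constructors. There is a countable supply of refinement variables $X, Y, Z, \dots$. An assignment $\theta$ maps each refinement variable $X$ to a function that sends each $d \in \underline{D}$ to a subset $\theta(X)(d) \subseteq \mathrm{Con}(d)$. A constructor set expression over $d$ is either a finite set $\{k_1,\dots,k_m\} \subseteq \mathrm{Con}(d)$ or a pair $X(d)$. Its meaning is $\theta[\![X(d)]\!] = \theta(X)(d)$ and $\theta[\![\{k_1,\dots,k_m\}]\!] = \{k_1,\dots,k_m\}$. An inclusion $S_1 \subseteq S_2$ relates two expressions over the same $d$, and $k \in S$ abbreviates $\{k\} \subseteq S$. A (conditional) constraint $\phi \mathbin{?} S_1 \subseteq S_2$ consists of a finite guard set $\phi$ of inclusions of the form $k \in X(d)$ together with a body $S_1 \subseteq S_2$. $\theta$ satisfies $\phi \mathbin{?} S_1 \subseteq S_2$ if the following holds: whenever $k \in \theta(X)(d)$ for all $k \in X(d)$ in $\phi$, then $\theta[\![S_1]\!] \subseteq \theta[\![S_2]\!]$. A solution of a set of constraints is an assignment satisfying all of them. A constraint is atomic if its body has one of the forms $X(d) \subseteq Y(d)$, $X(d) \subseteq \{k_1,\dots,k_m\}$, $k \in X(d)$, or $k \in \emptyset$.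 Conclusions of rules are converted to atomic form, as follows. A body $\{k_1,\dots,k_m\} \subseteq S$ becomes the bodies $k_i \in S$. A body $k \in \{k_1,\dots,k_m\}$ is dropped if $k$ is among the $k_i$, and becomes $k \in \emptyset$ otherwise. An atomic set $C$ is saturated if it is closed under the following rules: - (Transitivity) from $\phi \mathbin{?} S_1 \subseteq S_2$ and $\psi \mathbin{?} S_2 \subseteq S_3$, derive $\phi \cup \psi \mathbin{?} S_1 \subseteq S_3$; - (Satisfaction) from $\phi \mathbin{?} k \in X(d)$ and $\psi \cup \{k \in X(d)\} \mathbin{?} S_1 \subseteq S_2$, derive $\phi \cup \psi \mathbin{?} S_1 \subseteq S_2$; - (Weakening) from $\phi \mathbin{?} X(d) \subseteq Y(d)$ and $\psi \cup \{k \in Y(d)\} \mathbin{?} S_1 \subseteq S_2$, derive $\phi \cup \psi \cup \{k \in X(d)\} \mathbin{?} S_1 \subseteq S_2$. For a set $I$ of refinement variables, the restriction $C|_I$ is the set of those constraints in $C$ all of whose refinement variables (occurring in the guard or the body) lie in $I$. *)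

theory Defs
  imports Main "HOL-Library.Countable"
begin

text \<open>
  Datatype identifiers: the (finite) type 'd, so the finite set D of datatype
  identifiers is UNIV.
\<close>

definition is_assignment :: "('d \<Rightarrow> 'k set) \<Rightarrow> ('v \<Rightarrow> 'd \<Rightarrow> 'k set) \<Rightarrow> bool" where
  "is_assignment Con \<theta> \<longleftrightarrow> (\<forall>X d. \<theta> X d \<subseteq> Con d)"

text \<open>Constructor set expressions: a literal finite set, or a refinement variable
  (the datatype d is recorded in the inclusion).\<close>
datatype ('k, 'v) sexp = Lit "'k set" | RVar 'v

datatype ('d, 'k, 'v) incl = Incl 'd "('k, 'v) sexp" "('k, 'v) sexp"

text \<open>A guard atom (k, X, d) stands for the inclusion k \<in> X(d).
  A constraint is a pair (guard, body).\<close>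
type_synonym ('d, 'k, 'v) constr = "('k \<times> 'v \<times> 'd) set \<times> ('d, 'k, 'v) incl"

fun sem :: "('v \<Rightarrow> 'd \<Rightarrow> 'k set) \<Rightarrow> 'd \<Rightarrow> ('k, 'v) sexp \<Rightarrow> 'k set" where
  "sem \<theta> d (Lit K) = K"
| "sem \<theta> d (RVar X) = \<theta> X d"

fun sat_incl :: "('v \<Rightarrow> 'd \<Rightarrow> 'k set) \<Rightarrow> ('d, 'k, 'v) incl \<Rightarrow> bool" where
  "sat_incl \<theta> (Incl d S1 S2) \<longleftrightarrow> sem \<theta> d S1 \<subseteq> sem \<theta> d S2"

definition satisfies :: "('v \<Rightarrow> 'd \<Rightarrow> 'k set) \<Rightarrow> ('d, 'k, 'v) constr \<Rightarrow> bool" where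
  "satisfies \<theta> c \<longleftrightarrow>
     ((\<forall>(k, X, d) \<in> fst c. k \<in> \<theta> X d) \<longrightarrow> sat_incl \<theta> (snd c))"

definition is_solution :: "('d \<Rightarrow> 'k set) \<Rightarrow> ('v \<Rightarrow> 'd \<Rightarrow> 'k set) \<Rightarrow> ('d, 'k, 'v) constr set \<Rightarrow> bool" where
  "is_solution Con \<theta> C \<longleftrightarrow> is_assignment Con \<theta> \<and> (\<forall>c \<in> C. satisfies \<theta> c)"

fun wf_sexp :: "('d \<Rightarrow> 'k set) \<Rightarrow> 'd \<Rightarrow> ('k, 'v) sexp \<Rightarrow> bool" where
  "wf_sexp Con d (Lit K) \<longleftrightarrow> finite K \<and> K \<subseteq> Con d"
| "wf_sexp Con d (RVar X) \<longleftrightarrow> True"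

fun wf_incl :: "('d \<Rightarrow> 'k set) \<Rightarrow> ('d, 'k, 'v) incl \<Rightarrow> bool" where
  "wf_incl Con (Incl d S1 S2) \<longleftrightarrow> wf_sexp Con d S1 \<and> wf_sexp Con d S2"

definition wf_constr :: "('d \<Rightarrow> 'k set) \<Rightarrow> ('d, 'k, 'v) constr \<Rightarrow> bool" where
  "wf_constr Con c \<longleftrightarrow> finite (fst c) \<and> (\<forall>(k, X, d) \<in> fst c. k \<in> Con d) \<and> wf_incl Con (snd c)"

fun atomic_incl :: "('d, 'k, 'v) incl \<Rightarrow> bool" where
  "atomic_incl (Incl d (RVar X) (RVar Y)) \<longleftrightarrow> True"
| "atomic_incl (Incl d (RVar X) (Lit K)) \<longleftrightarrow> True"
| "atomic_incl (Incl d (Lit K) (RVar X)) \<longleftrightarrow> (\<exists>k. K = {k})"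
| "atomic_incl (Incl d (Lit K) (Lit K')) \<longleftrightarrow> (\<exists>k. K = {k}) \<and> K' = {}"

definition atomic_constr :: "('d, 'k, 'v) constr \<Rightarrow> bool" where
  "atomic_constr c \<longleftrightarrow> atomic_incl (snd c)"

fun atomize :: "('d, 'k, 'v) incl \<Rightarrow> ('d, 'k, 'v) incl set" where
  "atomize (Incl d (RVar X) S) = {Incl d (RVar X) S}"
| "atomize (Incl d (Lit K) (RVar Y)) = {Incl d (Lit {k}) (RVar Y) | k. k \<in> K}"
| "atomize (Incl d (Lit K) (Lit K')) = {Incl d (Lit {k}) (Lit {}) | k. k \<in> K - K'}"

definition concl_in :: "('d, 'k, 'v) constr set \<Rightarrow> ('k \<times> 'v \<times> 'd) set \<Rightarrow> ('d, 'k, 'v) incl \<Rightarrow> bool" where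
  "concl_in C \<phi> b \<longleftrightarrow> (\<forall>b' \<in> atomize b. (\<phi>, b') \<in> C)"

definition saturated :: "('d, 'k, 'v) constr set \<Rightarrow> bool" where
  "saturated C \<longleftrightarrow>
     \<comment> \<open>Transitivity\<close>
     (\<forall>\<phi> \<psi> d S1 S2 S3. (\<phi>, Incl d S1 S2) \<in> C \<longrightarrow> (\<psi>, Incl d S2 S3) \<in> C
        \<longrightarrow> concl_in C (\<phi> \<union> \<psi>) (Incl d S1 S3)) \<and>
     \<comment> \<open>Satisfaction\<close>
     (\<forall>\<phi> \<psi> k X d b. (\<phi>, Incl d (Lit {k}) (RVar X)) \<in> C \<longrightarrow> (\<psi> \<union> {(k, X, d)}, b) \<in> C
        \<longrightarrow> concl_in C (\<phi> \<union> \<psi>) b) \<and>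
     \<comment> \<open>Weakening\<close>
     (\<forall>\<phi> \<psi> k X Y d b. (\<phi>, Incl d (RVar X) (RVar Y)) \<in> C \<longrightarrow> (\<psi> \<union> {(k, Y, d)}, b) \<in> C
        \<longrightarrow> concl_in C (\<phi> \<union> \<psi> \<union> {(k, X, d)}) b)"

fun sexp_vars :: "('k, 'v) sexp \<Rightarrow> 'v set" where
  "sexp_vars (Lit K) = {}"
| "sexp_vars (RVar X) = {X}"

fun incl_vars :: "('d, 'k, 'v) incl \<Rightarrow> 'v set" where
  "incl_vars (Incl d S1 S2) = sexp_vars S1 \<union> sexp_vars S2"

definition constr_vars :: "('d, 'k, 'v) constr \<Rightarrow> 'v set" where
  "constr_vars c = {X. \<exists>k d. (k, X, d) \<in> fst c} \<union> incl_vars (snd c)"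

definition restrict :: "('d, 'k, 'v) constr set \<Rightarrow> 'v set \<Rightarrow> ('d, 'k, 'v) constr set" where
  "restrict C I = {c \<in> C. constr_vars c \<subseteq> I}"

end

theory Submission
  imports Defs
begin

locale SatL =
  fixes Con :: "'d \<Rightarrow> 'k set"
    and C :: "('d, 'k, 'v) constr set"
    and I :: "'v set"
    and \<theta> :: "'v \<Rightarrow> 'd \<Rightarrow> 'k set"
  assumes wfC: "\<forall>c \<in> C. wf_constr Con c \<and> atomic_constr c"
    and satC: "saturated C"
    and solC: "is_solution Con \<theta> (restrict C I)"
begin

primrec lev :: "nat \<Rightarrow> ('k \<times> 'v \<times> 'd) set" where
  "lev 0 = {(k,X,d). X \<in> I \<and> k \<in> \<theta> X d}"
| "lev (Suc n) = lev n \<union> {(k,Y,d). Y \<notin> I \<and>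
     ((\<exists>\<phi>. \<phi> \<subseteq> lev n \<and> (\<phi>, Incl d (Lit {k}) (RVar Y)) \<in> C) \<or>
      (\<exists>\<phi> X. \<phi> \<subseteq> lev n \<and> (k,X,d) \<in> lev n \<and> (\<phi>, Incl d (RVar X) (RVar Y)) \<in> C))}"

lemma lev_mono: "m \<le> n \<Longrightarrow> lev m \<subseteq> lev n"
  by (rule lift_Suc_mono_le[of lev]) auto

lemma levI: "(k,X,d) \<in> lev n \<Longrightarrow> X \<in> I \<Longrightarrow> k \<in> \<theta> X d"
  by (induction n) auto

lemma fin_sub: "finite \<phi> \<Longrightarrow> \<phi> \<subseteq> (\<Union>n. lev n) \<Longrightarrow> \<exists>n. \<phi> \<subseteq> lev n"
proof (induction rule: finite_induct)
  case empty then show ?case by auto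
next
  case (insert a F)
  then obtain n where n: "F \<subseteq> lev n" by auto
  from insert obtain m where m: "a \<in> lev m" by auto
  have "F \<subseteq> lev (max n m)" using n lev_mono[of n "max n m"] by auto
  moreover have "a \<in> lev (max n m)" using m lev_mono[of m "max n m"] by auto
  ultimately show ?case by auto
qed

lemma atomize_self: "atomic_incl b \<Longrightarrow> b \<in> atomize b"
  by (cases b rule: atomic_incl.cases) auto

lemma finC: "(\<phi>, b) \<in> C \<Longrightarrow> finite \<phi>"
  using wfC unfolding wf_constr_def by auto

lemma atC: "(\<phi>, b) \<in> C \<Longrightarrow> atomic_incl b"
  using wfC unfolding atomic_constr_def by auto

lemma satis_rule: "(\<phi>, Incl d (Lit {k}) (RVar X)) \<in> C \<Longrightarrow> (\<psi> \<union> {(k, X, d)}, b) \<in> C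
   \<Longrightarrow> (\<phi> \<union> \<psi>, b) \<in> C"
proof -
  assume a: "(\<phi>, Incl d (Lit {k}) (RVar X)) \<in> C" "(\<psi> \<union> {(k, X, d)}, b) \<in> C"
  have "b \<in> atomize b" using atomize_self[OF atC[OF a(2)]] .
  moreover have "concl_in C (\<phi> \<union> \<psi>) b" using satC a unfolding saturated_def by blast
  ultimately show ?thesis unfolding concl_in_def by blast
qed

lemma weak_rule: "(\<phi>, Incl d (RVar X) (RVar Y)) \<in> C \<Longrightarrow> (\<psi> \<union> {(k, Y, d)}, b) \<in> C
   \<Longrightarrow> (\<phi> \<union> \<psi> \<union> {(k, X, d)}, b) \<in> C"
proof -
  assume a: "(\<phi>, Incl d (RVar X) (RVar Y)) \<in> C" "(\<psi> \<union> {(k, Y, d)}, b) \<in> C"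
  have "b \<in> atomize b" using atomize_self[OF atC[OF a(2)]] .
  moreover have "concl_in C (\<phi> \<union> \<psi> \<union> {(k, X, d)}) b" using satC a unfolding saturated_def by blast
  ultimately show ?thesis unfolding concl_in_def by blast
qed

lemma trans_rule: "(\<phi>, Incl d S1 S2) \<in> C \<Longrightarrow> (\<psi>, Incl d S2 S3) \<in> C
   \<Longrightarrow> concl_in C (\<phi> \<union> \<psi>) (Incl d S1 S3)"
  using satC unfolding saturated_def by blast

lemma K1_aux: "\<forall>\<phi>. card (\<phi> - lev n) = N \<longrightarrow> (\<phi>, b) \<in> C \<longrightarrow> \<phi> \<subseteq> lev (Suc n)
   \<longrightarrow> (\<exists>\<phi>'. (\<phi>', b) \<in> C \<and> \<phi>' \<subseteq> lev n)"
proof (induction N rule: less_induct)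
  case (less N)
  show ?case
  proof (intro allI impI)
    fix \<phi> assume cN: "card (\<phi> - lev n) = N" and inC: "(\<phi>, b) \<in> C" and sub: "\<phi> \<subseteq> lev (Suc n)"
    have fin: "finite \<phi>" using finC[OF inC] .
    show "\<exists>\<phi>'. (\<phi>', b) \<in> C \<and> \<phi>' \<subseteq> lev n"
    proof (cases "\<phi> - lev n = {}")
      case True then show ?thesis using inC by auto
    next
      case False
      then obtain k Y d where a: "(k,Y,d) \<in> \<phi>" "(k,Y,d) \<notin> lev n" by auto
      have phi_eq: "\<phi> = (\<phi> - {(k,Y,d)}) \<union> {(k,Y,d)}" using a by auto
      have inC': "((\<phi> - {(k,Y,d)}) \<union> {(k,Y,d)}, b) \<in> C" using inC phi_eq by simp
      from a sub have der: "Y \<notin> I \<and>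
     ((\<exists>\<phi>. \<phi> \<subseteq> lev n \<and> (\<phi>, Incl d (Lit {k}) (RVar Y)) \<in> C) \<or>
      (\<exists>\<phi> X. \<phi> \<subseteq> lev n \<and> (k,X,d) \<in> lev n \<and> (\<phi>, Incl d (RVar X) (RVar Y)) \<in> C))"
        by auto
      have lt: "card (\<phi>' - lev n) < N" if "\<phi>' - lev n \<subseteq> (\<phi> - lev n) - {(k,Y,d)}" for \<phi>'
      proof -
        have "card (\<phi>' - lev n) \<le> card ((\<phi> - lev n) - {(k,Y,d)})"
          using that fin by (intro card_mono) auto
        also have "\<dots> < card (\<phi> - lev n)" using fin a by (intro card_Diff1_less) auto
        finally show ?thesis using cN by simp
      qed
      have sucsub: "lev n \<subseteq> lev (Suc n)" by auto
      from der show ?thesis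
      proof (elim conjE disjE exE)
        fix \<psi> assume p: "\<psi> \<subseteq> lev n" "(\<psi>, Incl d (Lit {k}) (RVar Y)) \<in> C"
        let ?g = "\<psi> \<union> (\<phi> - {(k,Y,d)})"
        have g: "(?g, b) \<in> C" using satis_rule[OF p(2) inC'] .
        have "card (?g - lev n) < N" using p by (intro lt) auto
        moreover have "?g \<subseteq> lev (Suc n)" using p sub sucsub by auto
        ultimately show ?thesis using less.IH g by blast
      next
        fix \<psi> X assume p: "\<psi> \<subseteq> lev n" "(k,X,d) \<in> lev n" "(\<psi>, Incl d (RVar X) (RVar Y)) \<in> C"
        let ?g = "\<psi> \<union> (\<phi> - {(k,Y,d)}) \<union> {(k,X,d)}"
        have g: "(?g, b) \<in> C" using weak_rule[OF p(3) inC'] .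
        have "card (?g - lev n) < N" using p by (intro lt) auto
        moreover have "?g \<subseteq> lev (Suc n)" using p sub sucsub by auto
        ultimately show ?thesis using less.IH g by blast
      qed
    qed
  qed
qed

lemma K: "(\<phi>, b) \<in> C \<Longrightarrow> \<phi> \<subseteq> lev n \<Longrightarrow> \<exists>\<phi>'. (\<phi>', b) \<in> C \<and> \<phi>' \<subseteq> lev 0"
proof (induction n arbitrary: \<phi>)
  case 0 then show ?case by blast
next
  case (Suc n)
  then obtain \<phi>' where "(\<phi>', b) \<in> C" "\<phi>' \<subseteq> lev n"
    using K1_aux[of n "card (\<phi> - lev n)" b] by blast
  then show ?case using Suc.IH by blast
qed

definition th' :: "'v \<Rightarrow> 'd \<Rightarrow> 'k set" where
  "th' X d = {k. \<exists>n. (k,X,d) \<in> lev n}"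

lemma th'_I: "X \<in> I \<Longrightarrow> th' X d = \<theta> X d"
  unfolding th'_def using levI by (auto intro: exI[of _ 0])

lemma sem_agree: "sexp_vars S \<subseteq> I \<Longrightarrow> sem th' d S = sem \<theta> d S"
  by (cases S) (auto simp: th'_I)

lemma R: "(\<phi>, b) \<in> C \<Longrightarrow> \<phi> \<subseteq> lev 0 \<Longrightarrow> incl_vars b \<subseteq> I \<Longrightarrow> sat_incl \<theta> b"
proof -
  assume a: "(\<phi>, b) \<in> C" "\<phi> \<subseteq> lev 0" "incl_vars b \<subseteq> I"
  have "constr_vars (\<phi>, b) \<subseteq> I" using a(2,3) unfolding constr_vars_def by auto
  then have "(\<phi>, b) \<in> restrict C I" using a(1) unfolding restrict_def by auto
  then have "satisfies \<theta> (\<phi>, b)" using solC unfolding is_solution_def by auto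
  moreover have "\<forall>(k, X, d) \<in> \<phi>. k \<in> \<theta> X d" using a(2) by auto
  ultimately show ?thesis unfolding satisfies_def by auto
qed

lemma R': "(\<phi>, b) \<in> C \<Longrightarrow> \<phi> \<subseteq> lev n \<Longrightarrow> incl_vars b \<subseteq> I \<Longrightarrow> sat_incl th' b"
proof -
  assume a: "(\<phi>, b) \<in> C" "\<phi> \<subseteq> lev n" "incl_vars b \<subseteq> I"
  then obtain \<phi>' where "(\<phi>', b) \<in> C" "\<phi>' \<subseteq> lev 0" using K by blast
  then have "sat_incl \<theta> b" using R a(3) by blast
  then show ?thesis using a(3) by (cases b) (simp add: sem_agree)
qed

lemma LB: "(\<psi>, Incl d (Lit {k}) S) \<in> C \<Longrightarrow> \<psi> \<subseteq> lev n \<Longrightarrow> k \<in> sem th' d S"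
proof -
  assume a: "(\<psi>, Incl d (Lit {k}) S) \<in> C" "\<psi> \<subseteq> lev n"
  show ?thesis
  proof (cases "\<exists>Y. S = RVar Y \<and> Y \<notin> I")
    case True
    then obtain Y where Y: "S = RVar Y" "Y \<notin> I" by auto
    then have "(k,Y,d) \<in> lev (Suc n)" using a by auto
    then show ?thesis using Y unfolding th'_def by (auto simp del: lev.simps)
  next
    case False
    then have "sexp_vars S \<subseteq> I" by (cases S) auto
    then have "sat_incl th' (Incl d (Lit {k}) S)" using R'[OF a] by simp
    then show ?thesis by simp
  qed
qed

lemma UB: "(k,X,d) \<in> lev j \<Longrightarrow> (\<phi>, Incl d (RVar X) S) \<in> C \<Longrightarrow> \<phi> \<subseteq> lev n
   \<Longrightarrow> k \<in> sem th' d S"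
proof (induction j arbitrary: X \<phi> n)
  case 0
  show ?case
  proof (cases "\<exists>Y. S = RVar Y \<and> Y \<notin> I")
    case True
    then obtain Y where Y: "S = RVar Y" "Y \<notin> I" by auto
    have "(k,X,d) \<in> lev n" using 0 lev_mono[of 0 n] by auto
    then have "(k,Y,d) \<in> lev (Suc n)" using 0 Y by auto
    then show ?thesis using Y unfolding th'_def by (auto simp del: lev.simps)
  next
    case False
    then have "sexp_vars S \<subseteq> I" by (cases S) auto
    moreover have X: "X \<in> I" using 0 by auto
    ultimately have "sat_incl th' (Incl d (RVar X) S)" using R'[OF 0(2,3)] by simp
    moreover have "k \<in> th' X d" using 0(1) unfolding th'_def by blast
    ultimately show ?thesis by auto
  qed
next
  case (Suc j)
  show ?case
  proof (cases "\<exists>Y. S = RVar Y \<and> Y \<notin> I")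
    case True
    then obtain Y where Y: "S = RVar Y" "Y \<notin> I" by auto
    have "(k,X,d) \<in> lev (max n (Suc j))" using Suc.prems lev_mono[of "Suc j" "max n (Suc j)"] by (auto simp del: lev.simps)
    moreover have "\<phi> \<subseteq> lev (max n (Suc j))" using Suc.prems lev_mono[of n "max n (Suc j)"] by (auto simp del: lev.simps)
    ultimately have "(k,Y,d) \<in> lev (Suc (max n (Suc j)))" using Suc.prems Y by auto
    then show ?thesis using Y unfolding th'_def by (auto simp del: lev.simps)
  next
    case False
    then have SI: "sexp_vars S \<subseteq> I" by (cases S) auto
    show ?thesis
    proof (cases "X \<in> I")
      case True
      then have "sat_incl th' (Incl d (RVar X) S)" using SI R'[OF Suc.prems(2,3)] by simp
      moreover have "k \<in> th' X d" using Suc.prems(1) unfolding th'_def by blast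
      ultimately show ?thesis by auto
    next
      case XnI: False
      show ?thesis
      proof (cases "(k,X,d) \<in> lev j")
        case True then show ?thesis using Suc.IH Suc.prems by blast
      next
        case False
        then have der: "(\<exists>\<psi>. \<psi> \<subseteq> lev j \<and> (\<psi>, Incl d (Lit {k}) (RVar X)) \<in> C) \<or>
          (\<exists>\<psi> Z. \<psi> \<subseteq> lev j \<and> (k,Z,d) \<in> lev j \<and> (\<psi>, Incl d (RVar Z) (RVar X)) \<in> C)"
          using Suc.prems(1) by auto
        have mj: "lev j \<subseteq> lev (max n j)" "lev n \<subseteq> lev (max n j)" using lev_mono by auto
        from der show ?thesis
        proof (elim disjE exE conjE)
          fix \<psi> assume p: "\<psi> \<subseteq> lev j" "(\<psi>, Incl d (Lit {k}) (RVar X)) \<in> C"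
          have ci: "concl_in C (\<psi> \<union> \<phi>) (Incl d (Lit {k}) S)" using trans_rule[OF p(2) Suc.prems(2)] .
          have gs: "\<psi> \<union> \<phi> \<subseteq> lev (max n j)" using p(1) Suc.prems(3) mj by auto
          show ?thesis
          proof (cases S)
            case (Lit K)
            show ?thesis
            proof (cases "k \<in> K")
              case True then show ?thesis using Lit by simp
            next
              case False
              then have "(\<psi> \<union> \<phi>, Incl d (Lit {k}) (Lit {})) \<in> C"
                using ci Lit unfolding concl_in_def by auto
              then have "k \<in> sem th' d (Lit {})" using LB gs by blast
              then show ?thesis by simp
            qed
          next
            case (RVar Y)
            then have "(\<psi> \<union> \<phi>, Incl d (Lit {k}) S) \<in> C"
              using ci unfolding concl_in_def by auto
            then show ?thesis using LB gs by blast
          qed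
        next
          fix \<psi> Z assume p: "\<psi> \<subseteq> lev j" "(k,Z,d) \<in> lev j" "(\<psi>, Incl d (RVar Z) (RVar X)) \<in> C"
          have ci: "concl_in C (\<psi> \<union> \<phi>) (Incl d (RVar Z) S)" using trans_rule[OF p(3) Suc.prems(2)] .
          then have "(\<psi> \<union> \<phi>, Incl d (RVar Z) S) \<in> C" unfolding concl_in_def by auto
          moreover have "\<psi> \<union> \<phi> \<subseteq> lev (max n j)" using p(1) Suc.prems(3) mj by auto
          ultimately show ?thesis using Suc.IH p(2) by blast
        qed
      qed
    qed
  qed
qed

lemma lev_Con: "(k,X,d) \<in> lev n \<Longrightarrow> k \<in> Con d"
proof (induction n arbitrary: k X d)
  case 0
  then show ?case using solC unfolding is_solution_def is_assignment_def by auto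
next
  case (Suc n)
  show ?case
  proof (cases "(k,X,d) \<in> lev n")
    case True then show ?thesis using Suc.IH by blast
  next
    case False
    then have "(\<exists>\<phi>. (\<phi>, Incl d (Lit {k}) (RVar X)) \<in> C) \<or> (\<exists>Z. (k,Z,d) \<in> lev n)"
      using Suc.prems by auto
    then show ?thesis
    proof
      assume "\<exists>\<phi>. (\<phi>, Incl d (Lit {k}) (RVar X)) \<in> C"
      then obtain \<phi> where "(\<phi>, Incl d (Lit {k}) (RVar X)) \<in> C" by auto
      then have "wf_constr Con (\<phi>, Incl d (Lit {k}) (RVar X))" using wfC by blast
      then show ?thesis unfolding wf_constr_def by simp
    next
      assume "\<exists>Z. (k,Z,d) \<in> lev n"
      then show ?thesis using Suc.IH by blast
    qed
  qed
qed

lemma main: "is_solution Con th' C"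
  unfolding is_solution_def
proof (intro conjI ballI)
  show "is_assignment Con th'"
    unfolding is_assignment_def th'_def using lev_Con by blast
next
  fix c assume cC: "c \<in> C"
  obtain \<phi> b where c: "c = (\<phi>, b)" by (cases c)
  show "satisfies th' c"
    unfolding satisfies_def
  proof
    assume g: "\<forall>(k, X, d)\<in>fst c. k \<in> th' X d"
    have "\<phi> \<subseteq> (\<Union>n. lev n)"
    proof
      fix a assume "a \<in> \<phi>"
      then show "a \<in> (\<Union>n. lev n)" using g c unfolding th'_def by (cases a) fastforce
    qed
    moreover have inC: "(\<phi>, b) \<in> C" using cC c by simp
    moreover have "finite \<phi>" using finC[OF inC] .
    ultimately obtain n where n: "\<phi> \<subseteq> lev n" using fin_sub by blast
    have ub: "sem th' d (RVar X) \<subseteq> sem th' d S" if "(\<phi>, Incl d (RVar X) S) \<in> C" for d X S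
    proof
      fix k assume "k \<in> sem th' d (RVar X)"
      then obtain j where "(k,X,d) \<in> lev j" unfolding th'_def by auto
      then show "k \<in> sem th' d S" using UB[OF _ that n] by blast
    qed
    have "atomic_incl b" using atC inC .
    then have "sat_incl th' b"
    proof (cases b rule: atomic_incl.cases)
      case (1 d X Y)
      then show ?thesis using ub[of d X] inC by force
    next
      case (2 d X K)
      then show ?thesis using ub[of d X] inC by force
    next
      case (3 d K X)
      then obtain k where "K = {k}" using \<open>atomic_incl b\<close> by auto
      then show ?thesis using LB[OF _ n, of d k "RVar X"] inC 3 by simp
    next
      case (4 d K K')
      then obtain k where "K = {k}" using \<open>atomic_incl b\<close> by auto
      then show ?thesis using LB[OF _ n, of d k "Lit K'"] inC 4 by simp
    qed
    then show "sat_incl th' (snd c)" using c by simp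
  qed
qed

end

theorem theorem9p3:
  fixes Con :: "'d::finite \<Rightarrow> 'k set"
    and C :: "('d, 'k, 'v::countable) constr set"
    and I :: "'v set"
    and \<theta> :: "'v \<Rightarrow> 'd \<Rightarrow> 'k set"
  assumes "infinite (UNIV :: 'v set)"
    and "\<forall>d. finite (Con d)"
    and "\<forall>c \<in> C. wf_constr Con c \<and> atomic_constr c"
    and "saturated C"
    and "is_solution Con \<theta> (restrict C I)"
  shows "\<exists>\<theta>'. is_solution Con \<theta>' C \<and> (\<forall>X \<in> I. \<forall>d. \<theta>' X d = \<theta> X d)"
proof -
  interpret SatL Con C I \<theta> using assms(3-5) by unfold_locales
  show ?thesis using main th'_I by blast
qed

end
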